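(* Consider problem (P) and the approximate ADMM algorithm as described in the context, with fixed initial values $x^0,z^0,y^0$ and parameters $\rho>0,\sigma>0,\alpha\in(0,2)$. For any nonnegative summable error sequences $(\mu^k),(\nu^k)$, the limits $$\delta x\coloneqq\lim_{k\to\infty}(x^{k+1}-x^k),\qquad \delta y\coloneqq\lim_{k\to\infty}(y^{k+1}-y^k)$$ of the iterates of the algorithm exist and are equal to the corresponding limits for the iterates of the same algorithm run with $\mu^k=\nu^k=0$ for all $k$ (i.e. with all steps computed exactly).
   Context: Problem (P): $\min_{x\in\mathbb{R}^n,z\in\mathbb{R}^m}\ \tfrac12x^TPx+q^Tx$ s.t. $Ax=z$, $z\in\mathcal{C}$, where $P$ is symmetric positive semidefinite, $q\in\mathbb{R}^n$, $A\in\mathbb{R}^{m\times n}$, and $\mathcal{C}\subseteq\mathbb{R}^m$ is a nonempty closed convex set that is the Cartesian product of a compact convex set and a translate of a closed convex cone. Approximate ADMM algorithm: given $x^0,z^0,y^0$, $\rho>0,\sigma>0,\alpha\in(0,2)$ and nonnegative summable $(\mu^k),(\nu^k)$, for $k=0,1,\dots$: 1. choose $(\tilde x^{k+1},\tilde z^{k+1})$ within Euclidean distance $\mu^k$ of the exact solution $(\hat x,\hat z)$ of $\begin{bmatrix}P+\sigma I & \rho A^T\\ \rho A & -\rho I\end{bmatrix}\begin{bmatrix}\hat x\\ \hat z\end{bmatrix}=\begin{bmatrix}\sigma x^k+\rho A^T(z^k-y^k/\rho)-q\\ 0\end{bmatrix}$; 2. $x^{k+1}=\alpha\tilde x^{k+1}+(1-\alpha)x^k$;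 3. choose $z^{k+1}$ within Euclidean distance $\nu^k$ of $\Pi_{\mathcal{C}}(\alpha\tilde z^{k+1}+(1-\alpha)z^k+y^k/\rho)$, $\Pi_{\mathcal{C}}$ the Euclidean projection onto $\mathcal{C}$; 4. $y^{k+1}=y^k+\rho(\alpha\tilde z^{k+1}+(1-\alpha)z^k-z^{k+1})$. *)

theory Defs
  imports "HOL-Analysis.Analysis"
begin

text \<open>Coordinate restriction of a vector in R^m to an index set S (other coordinates set to 0).\<close>
definition restr :: "'m set \<Rightarrow> real^'m \<Rightarrow> real^'m" where
  "restr S z = (\<chi> i. if i \<in> S then z $ i else 0)"

text \<open>C is (up to the coordinate splitting R^m = R^S x R^(complement S)) the Cartesian product
  of a nonempty compact convex set D and a translate b + K of a nonempty closed convex cone K.\<close>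
definition product_compact_cone :: "(real^'m) set \<Rightarrow> bool" where
  "product_compact_cone C \<longleftrightarrow>
     (\<exists>S D K b.
        D \<noteq> {} \<and> compact D \<and> convex D \<and> (\<forall>d\<in>D. restr S d = d) \<and>
        K \<noteq> {} \<and> closed K \<and> convex K \<and> cone K \<and> (\<forall>v\<in>K. restr (- S) v = v) \<and>
        restr (- S) b = b \<and>
        C = {z. restr S z \<in> D \<and> restr (- S) z \<in> (\<lambda>v. b + v) ` K})"

text \<open>The approximate ADMM iteration with error sequences mu, nu.
  xt, zt are the tilde iterates (xt (Suc k), zt (Suc k) are computed in step k).\<close>
definition approx_admm ::
  "real^'n^'n \<Rightarrow> real^'n \<Rightarrow> real^'n^'m \<Rightarrow> (real^'m) set \<Rightarrow> real \<Rightarrow> real \<Rightarrow> real \<Rightarrow>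
   (nat \<Rightarrow> real) \<Rightarrow> (nat \<Rightarrow> real) \<Rightarrow>
   (nat \<Rightarrow> real^'n) \<Rightarrow> (nat \<Rightarrow> real^'m) \<Rightarrow> (nat \<Rightarrow> real^'m) \<Rightarrow>
   (nat \<Rightarrow> real^'n) \<Rightarrow> (nat \<Rightarrow> real^'m) \<Rightarrow> bool" where
  "approx_admm P q A C \<rho> \<sigma> \<alpha> \<mu> \<nu> x z y xt zt \<longleftrightarrow>
    (\<forall>k.
      (\<exists>xh zh.
         P *v xh + \<sigma> *\<^sub>R xh + \<rho> *\<^sub>R (transpose A *v zh)
           = \<sigma> *\<^sub>R x k + \<rho> *\<^sub>R (transpose A *v (z k - (1 / \<rho>) *\<^sub>R y k)) - q \<and>
         \<rho> *\<^sub>R (A *v xh) - \<rho> *\<^sub>R zh = 0 \<and>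
         sqrt ((norm (xt (Suc k) - xh))\<^sup>2 + (norm (zt (Suc k) - zh))\<^sup>2) \<le> \<mu> k) \<and>
      x (Suc k) = \<alpha> *\<^sub>R xt (Suc k) + (1 - \<alpha>) *\<^sub>R x k \<and>
      dist (z (Suc k))
        (closest_point C (\<alpha> *\<^sub>R zt (Suc k) + (1 - \<alpha>) *\<^sub>R z k + (1 / \<rho>) *\<^sub>R y k)) \<le> \<nu> k \<and>
      y (Suc k) = y k + \<rho> *\<^sub>R (\<alpha> *\<^sub>R zt (Suc k) + (1 - \<alpha>) *\<^sub>R z k - z (Suc k)))"

end

theory Submission
  imports Defs
begin

lemma avg_ident:
  fixes p q :: "'a::real_inner"
  shows "(norm ((1-l) *\<^sub>R p + l *\<^sub>R q))^2 = (1-l)*(norm p)^2 + l*(norm q)^2 - l*(1-l)*(norm (p - q))^2"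
  by (simp add: power2_norm_eq_inner inner_simps algebra_simps)

definition firm :: "('a::real_inner \<Rightarrow> 'a) \<Rightarrow> bool" where
  "firm J \<longleftrightarrow> (\<forall>x y. (norm (J x - J y))^2 \<le> inner (J x - J y) (x - y))"

lemma firm_refl_nonexp:
  assumes "firm J"
  shows "norm ((2 *\<^sub>R J x - x) - (2 *\<^sub>R J y - y)) \<le> norm (x - y)"
proof -
  have e: "(2 *\<^sub>R J x - x) - (2 *\<^sub>R J y - y) = 2 *\<^sub>R (J x - J y) - (x - y)"
    by (simp add: algebra_simps)
  have "(norm (2 *\<^sub>R (J x - J y) - (x - y)))^2
        = 4 * (norm (J x - J y))^2 - 4 * inner (J x - J y) (x - y) + (norm (x - y))^2"
    by (simp add: power2_norm_eq_inner inner_simps algebra_simps inner_commute)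
  also have "\<dots> \<le> (norm (x - y))^2"
  proof -
    have "(norm (J x - J y))^2 \<le> inner (J x - J y) (x - y)" using assms unfolding firm_def by blast
    then show ?thesis by linarith
  qed
  finally show ?thesis unfolding e by (rule power2_le_imp_le) simp
qed

lemma avg_of_firm:
  fixes J1 J2 :: "'a::real_inner \<Rightarrow> 'a"
  assumes f1: "firm J1" and f2: "firm J2" and l: "0 < l" "l < 1"
  defines "T \<equiv> \<lambda>x. (1 - l) *\<^sub>R x + l *\<^sub>R (2 *\<^sub>R J1 (2 *\<^sub>R J2 x - x) - (2 *\<^sub>R J2 x - x))"
  shows "(norm (T x - T y))^2 \<le> (norm (x - y))^2 - ((1 - l) / l) * (norm ((x - T x) - (y - T y)))^2"
proof -
  define N where "N = (\<lambda>x. 2 *\<^sub>R J1 (2 *\<^sub>R J2 x - x) - (2 *\<^sub>R J2 x - x))"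
  have N: "norm (N x - N y) \<le> norm (x - y)"
    using firm_refl_nonexp[OF f1, of "2 *\<^sub>R J2 x - x" "2 *\<^sub>R J2 y - y"]
      firm_refl_nonexp[OF f2, of x y] unfolding N_def by linarith
  have T: "T x - T y = (1 - l) *\<^sub>R (x - y) + l *\<^sub>R (N x - N y)"
    unfolding T_def N_def by (simp add: algebra_simps)
  have D: "(x - T x) - (y - T y) = l *\<^sub>R ((x - y) - (N x - N y))"
    unfolding T_def N_def by (simp add: algebra_simps)
  have "(norm (T x - T y))^2 = (1-l)*(norm (x-y))^2 + l*(norm (N x - N y))^2
      - l*(1-l)*(norm ((x - y) - (N x - N y)))^2"
    unfolding T by (rule avg_ident)
  also have "\<dots> \<le> (1-l)*(norm (x-y))^2 + l*(norm (x - y))^2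
      - l*(1-l)*(norm ((x - y) - (N x - N y)))^2"
  proof -
    have "(norm (N x - N y))^2 \<le> (norm (x - y))^2" using N by (simp add: power_mono)
    then show ?thesis using l by (simp add: mult_left_mono)
  qed
  also have "l*(1-l)*(norm ((x - y) - (N x - N y)))^2
     = ((1 - l) / l) * (norm ((x - T x) - (y - T y)))^2"
  proof -
    have "(norm ((x - T x) - (y - T y)))^2 = l^2 * (norm ((x - y) - (N x - N y)))^2"
      unfolding D norm_scaleR using l by (simp add: power_mult_distrib)
    then show ?thesis using l by (simp add: power2_eq_square field_simps)
  qed
  finally have "(norm (T x - T y))^2 \<le> (1 - l) * (norm (x - y))^2 + l * (norm (x - y))^2 -
     (1 - l) / l * (norm (x - T x - (y - T y)))^2" .
  moreover have "(1 - l) * (norm (x - y))^2 + l * (norm (x - y))^2 = (norm (x - y))^2"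
    by (simp add: algebra_simps)
  ultimately show ?thesis by linarith
qed

locale avg_op =
  fixes T :: "'a::euclidean_space \<Rightarrow> 'a" and c :: real
  assumes c_pos: "c > 0"
    and avg: "\<And>x y. (norm (T x - T y))^2 \<le> (norm (x - y))^2 - c * (norm ((x - T x) - (y - T y)))^2"
begin

definition D :: "'a \<Rightarrow> 'a" where "D x = x - T x"

lemma nonexp: "norm (T x - T y) \<le> norm (x - y)"
proof -
  have "(norm (T x - T y))^2 \<le> (norm (x - y))^2"
    using avg[of x y] c_pos by (smt (verit) mult_nonneg_nonneg zero_le_power2)
  then show ?thesis by (rule power2_le_imp_le) simp
qed

lemma mono: "0 \<le> inner (D x - D y) (x - y)"
proof -
  have e: "T x - T y = (x - y) - (D x - D y)" unfolding D_def by (simp add: algebra_simps)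
  have "(norm (T x - T y))^2 = (norm (x - y))^2 - 2 * inner (D x - D y) (x - y) + (norm (D x - D y))^2"
    unfolding e by (simp add: power2_norm_eq_inner inner_simps algebra_simps inner_commute)
  with avg[of x y] have "2 * inner (D x - D y) (x - y) \<ge> (1 + c) * (norm (D x - D y))^2"
    unfolding D_def by (simp add: algebra_simps)
  moreover have "0 \<le> (1 + c) * (norm (D x - D y))^2" using c_pos by simp
  ultimately show ?thesis by linarith
qed

lemma D_orbit_dec:
  assumes "u (Suc k) = T (u k)"
  shows "norm (D (u (Suc k))) \<le> norm (D (u k))"
  using nonexp[of "u k" "T (u k)"] assms unfolding D_def by simp

lemma perturb:
  assumes s: "\<And>k. s (Suc k) = T (s k) + e k" and se: "summable (\<lambda>k. norm (e k))"
    and u: "\<And>k. u (Suc k) = T (u k)"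
  shows "(\<lambda>k. D (s k) - D (u k)) \<longlonglongrightarrow> 0"
proof -
  define E where "E = (\<Sum>k. norm (e k))"
  have sumle: "(\<Sum>i<n. norm (e i)) \<le> E" for n
    unfolding E_def by (rule sum_le_suminf[OF se]) auto
  have ele: "norm (e k) \<le> E" for k
    using sum_le_suminf[OF se, of "{k}"] unfolding E_def by simp
  define a where "a k = norm (s k - u k)" for k
  define M where "M = a 0 + E"
  have step: "a (Suc k) \<le> norm (T (s k) - T (u k)) + norm (e k)" for k
    unfolding a_def s u by (metis add.commute add_diff_eq norm_triangle_ineq diff_add_eq)
  have abound: "a k \<le> a 0 + (\<Sum>i<k. norm (e i))" for k
  proof (induction k)
    case 0 then show ?case by simp
  next
    case (Suc k)
    have "a (Suc k) \<le> a k + norm (e k)"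
      using step[of k] nonexp[of "s k" "u k"] unfolding a_def by linarith
    then show ?case using Suc by simp
  qed
  have aM: "a k \<le> M" for k using abound[of k] sumle[of k] unfolding M_def by linarith
  have a0: "0 \<le> a k" for k unfolding a_def by simp
  have E0: "0 \<le> E" using sumle[of 0] by simp
  have key: "c * (norm (D (s k) - D (u k)))^2 \<le> (a k)^2 - (a (Suc k))^2 + norm (e k) * (2 * M + E)" for k
  proof -
    define t where "t = norm (T (s k) - T (u k))"
    define b where "b = norm (D (s k) - D (u k))"
    define ek where "ek = norm (e k)"
    have t2: "t^2 \<le> (a k)^2 - c * b^2" using avg[of "s k" "u k"] unfolding t_def a_def b_def D_def .
    have t0: "0 \<le> t" unfolding t_def by simp
    have ta: "t \<le> M" using nonexp[of "s k" "u k"] aM[of k] unfolding t_def a_def by linarith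
    have ek0: "0 \<le> ek" unfolding ek_def by simp
    have ekE: "ek \<le> E" unfolding ek_def by (rule ele)
    have "a (Suc k) \<le> t + ek" using step[of k] unfolding t_def ek_def .
    then have "(a (Suc k))^2 \<le> (t + ek)^2" using a0[of "Suc k"] by (simp add: power_mono)
    also have "\<dots> = t^2 + ek * (2 * t + ek)" by (simp add: power2_eq_square algebra_simps)
    also have "\<dots> \<le> t^2 + ek * (2 * M + E)"
      using ek0 ta ekE by (intro add_left_mono mult_left_mono) auto
    finally show ?thesis using t2 unfolding b_def ek_def by linarith
  qed
  have psum: "(\<Sum>k<n. c * (norm (D (s k) - D (u k)))^2) \<le> (a 0)^2 - (a n)^2 + (2 * M + E) * (\<Sum>k<n. norm (e k))" for n
  proof (induction n)
    case 0 then show ?case by simp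
  next
    case (Suc n)
    then show ?case using key[of n] by (simp add: algebra_simps)
  qed
  have M0: "0 \<le> M" using aM[of 0] a0[of 0] by linarith
  have "(\<Sum>k<n. c * (norm (D (s k) - D (u k)))^2) \<le> (a 0)^2 + (2 * M + E) * E" for n
  proof -
    have "(2 * M + E) * (\<Sum>k<n. norm (e k)) \<le> (2 * M + E) * E"
      using sumle[of n] M0 E0 by (intro mult_left_mono) auto
    then show ?thesis using psum[of n] by (smt (verit) zero_le_power2)
  qed
  then have "summable (\<lambda>k. c * (norm (D (s k) - D (u k)))^2)"
    by (intro summableI_nonneg_bounded) (use c_pos in auto)
  then have "(\<lambda>k. c * (norm (D (s k) - D (u k)))^2) \<longlonglongrightarrow> 0" by (rule summable_LIMSEQ_zero)
  then have "(\<lambda>k. (1/c) * (c * (norm (D (s k) - D (u k)))^2)) \<longlonglongrightarrow> (1/c) * 0"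
    by (intro tendsto_mult tendsto_const)
  then have "(\<lambda>k. (norm (D (s k) - D (u k)))^2) \<longlonglongrightarrow> 0" using c_pos by simp
  then have "(\<lambda>k. sqrt ((norm (D (s k) - D (u k)))^2)) \<longlonglongrightarrow> sqrt 0" by (intro tendsto_real_sqrt)
  then have "(\<lambda>k. norm (D (s k) - D (u k))) \<longlonglongrightarrow> 0" by simp
  then show ?thesis by (simp add: tendsto_norm_zero_iff)
qed

lemma midpoint_approx:
  assumes eta: "\<eta> > 0"
  shows "\<exists>x. norm (D x - (1/2) *\<^sub>R (D y + D y')) < \<eta>"
proof -
  define a where "a = D y"
  define b where "b = D y'"
  define m where "m = (1/2) *\<^sub>R (a + b)"
  define K1 where "K1 = \<bar>inner (m - a) y\<bar> + \<bar>inner (m - b) y'\<bar>"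
  define K2 where "K2 = norm (y + y')"
  define \<epsilon> where "\<epsilon> = min 1 (min (\<eta> / (2 * (K2 + 1))) (\<eta>^2 / (4 * (K1 + 1))))"
  have K10: "0 \<le> K1" unfolding K1_def by simp
  have K20: "0 \<le> K2" unfolding K2_def by simp
  have ep0: "0 < \<epsilon>" unfolding \<epsilon>_def using eta K10 K20 by auto
  have ep1: "\<epsilon> \<le> 1" unfolding \<epsilon>_def by simp
  have ep2: "\<epsilon> * K2 < \<eta> / 2"
  proof -
    have "\<epsilon> \<le> \<eta> / (2 * (K2 + 1))" unfolding \<epsilon>_def by simp
    then have "\<epsilon> * (K2 + 1) \<le> \<eta> / 2" using K20 by (simp add: field_simps)
    then show ?thesis using ep0 by (simp add: algebra_simps)
  qed
  have ep3: "\<epsilon> * K1 < \<eta>^2 / 4"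
  proof -
    have "\<epsilon> \<le> \<eta>^2 / (4 * (K1 + 1))" unfolding \<epsilon>_def by simp
    then have "\<epsilon> * (K1 + 1) \<le> \<eta>^2 / 4" using K10 by (simp add: field_simps)
    then show ?thesis using ep0 by (simp add: algebra_simps)
  qed
  define f where "f x = (1 / (1 + \<epsilon>)) *\<^sub>R (T x + m)" for x
  have "\<exists>!x. f x = x"
  proof (rule banach_fix_type)
    show "0 \<le> 1 / (1 + \<epsilon>)" using ep0 by simp
    show "1 / (1 + \<epsilon>) < 1" using ep0 by simp
    show "\<forall>x y. dist (f x) (f y) \<le> 1 / (1 + \<epsilon>) * dist x y"
    proof (intro allI)
      fix x y
      have "f x - f y = (1 / (1 + \<epsilon>)) *\<^sub>R (T x - T y)"
        unfolding f_def by (simp add: algebra_simps)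
      then have "dist (f x) (f y) = (1 / (1 + \<epsilon>)) * norm (T x - T y)"
        using ep0 by (simp add: dist_norm)
      also have "\<dots> \<le> (1 / (1 + \<epsilon>)) * dist x y"
        using nonexp[of x y] ep0 by (simp add: dist_norm divide_right_mono)
      finally show "dist (f x) (f y) \<le> 1 / (1 + \<epsilon>) * dist x y" by simp
    qed
  qed
  then obtain x where fx: "f x = x" by blast
  have Dx: "D x = m - \<epsilon> *\<^sub>R x"
  proof -
    have "(1 + \<epsilon>) *\<^sub>R x = (1 + \<epsilon>) *\<^sub>R ((1 / (1 + \<epsilon>)) *\<^sub>R (T x + m))"
      using fx unfolding f_def by simp
    also have "\<dots> = T x + m" using ep0 by simp
    finally have "(1 + \<epsilon>) *\<^sub>R x = T x + m" .
    then have "x + \<epsilon> *\<^sub>R x = T x + m" by (simp add: algebra_simps)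
    then show ?thesis unfolding D_def by (simp add: algebra_simps)
  qed
  have m1: "0 \<le> inner (m - \<epsilon> *\<^sub>R x - a) (x - y)" using mono[of x y] Dx unfolding a_def by simp
  have m2: "0 \<le> inner (m - \<epsilon> *\<^sub>R x - b) (x - y')" using mono[of x y'] Dx unfolding b_def by simp
  have mab: "(m - a) + (m - b) = 0" unfolding m_def by (simp add: algebra_simps scaleR_2[symmetric])
  have "inner (m - \<epsilon> *\<^sub>R x - a) (x - y) + inner (m - \<epsilon> *\<^sub>R x - b) (x - y')
      = inner ((m - a) + (m - b)) x - 2 * \<epsilon> * inner x x - inner (m - a) y - inner (m - b) y'
        + \<epsilon> * inner x (y + y')"
    by (simp add: inner_simps algebra_simps inner_commute)
  then have "2 * \<epsilon> * inner x x \<le> - inner (m - a) y - inner (m - b) y' + \<epsilon> * inner x (y + y')"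
    using m1 m2 mab by simp
  also have "\<dots> \<le> K1 + \<epsilon> * (norm x * K2)"
  proof -
    have "inner x (y + y') \<le> norm x * K2" unfolding K2_def by (rule norm_cauchy_schwarz)
    then have "\<epsilon> * inner x (y + y') \<le> \<epsilon> * (norm x * K2)" using ep0 by simp
    moreover have "- inner (m - a) y - inner (m - b) y' \<le> K1" unfolding K1_def by linarith
    ultimately show ?thesis by linarith
  qed
  finally have ineq: "2 * \<epsilon> * (norm x)^2 \<le> K1 + \<epsilon> * (norm x * K2)"
    by (simp add: power2_norm_eq_inner)
  define r where "r = \<epsilon> * norm x"
  have r0: "0 \<le> r" unfolding r_def using ep0 by simp
  have r2: "r^2 \<le> \<epsilon> * K1 + \<epsilon> * K2 * r"
  proof -
    have "\<epsilon> * (2 * \<epsilon> * (norm x)^2) \<le> \<epsilon> * (K1 + \<epsilon> * (norm x * K2))"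
      using ineq ep0 by simp
    then have "2 * r^2 \<le> \<epsilon> * K1 + \<epsilon> * K2 * r" unfolding r_def by (simp add: power2_eq_square algebra_simps)
    moreover have "0 \<le> r^2" by simp
    ultimately show ?thesis by linarith
  qed
  have "r < \<eta>"
  proof (rule ccontr)
    assume "\<not> r < \<eta>"
    then have re: "\<eta> \<le> r" by simp
    have "\<epsilon> * K2 * r \<le> (\<eta> / 2) * r" using mult_right_mono[of "\<epsilon> * K2" "\<eta> / 2" r] ep2 r0 by simp
    also have "\<dots> \<le> (r / 2) * r" using re r0 eta by (simp add: mult_right_mono)
    finally have h1: "\<epsilon> * K2 * r \<le> r^2 / 2" by (simp add: power2_eq_square)
    have "\<eta>^2 \<le> r^2" using re eta by (simp add: power_mono)
    then have "\<epsilon> * K1 < r^2 / 4" using ep3 by linarith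
    then have "r^2 < r^2 / 4 + r^2 / 2" using r2 h1 by linarith
    moreover have "0 < r^2" using re eta by simp
    ultimately show False by simp
  qed
  moreover have "norm (D x - m) = r" unfolding Dx r_def using ep0 by simp
  ultimately show ?thesis unfolding m_def a_def b_def by auto
qed

lemma orbit_conv:
  assumes u: "\<And>k. u (Suc k) = T (u k)"
  shows "convergent (\<lambda>k. D (u k))"
proof -
  define g where "g k = norm (D (u k))" for k
  have "decseq g" unfolding g_def by (rule decseq_SucI) (use D_orbit_dec[of u, OF u] in auto)
  then obtain L where gL: "g \<longlonglongrightarrow> L" and Lg: "\<forall>i. L \<le> g i"
    using decseq_convergent[of g 0] unfolding g_def by auto
  have L0: "0 \<le> L" using LIMSEQ_le_const[OF gL, of 0] unfolding g_def by simp
  have Ly: "L \<le> norm (D y)" for y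
  proof -
    define w where "w k = (T ^^ k) y" for k
    have w: "w (Suc k) = T (w k)" for k unfolding w_def by simp
    have "(\<lambda>k. D (u k) - D (w k)) \<longlonglongrightarrow> 0"
      using perturb[of u "\<lambda>_. 0" w] u w by simp
    then have h: "(\<lambda>k. norm (D (y)) + norm (D (u k) - D (w k))) \<longlonglongrightarrow> norm (D y) + 0"
      by (intro tendsto_add tendsto_const tendsto_norm_zero)
    have wd: "norm (D (w k)) \<le> norm (D y)" for k
    proof (induction k)
      case 0 then show ?case by (simp add: w_def)
    next
      case (Suc k) then show ?case using D_orbit_dec[of w k] w by (meson order_trans)
    qed
    have "g k \<le> norm (D y) + norm (D (u k) - D (w k))" for k
      using wd[of k] norm_triangle_ineq2[of "D (u k)" "D (w k)"] unfolding g_def by linarith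
    then show ?thesis using LIMSEQ_le[OF gL h] by auto
  qed
  have Lmid: "L \<le> norm ((1/2) *\<^sub>R (D y + D y'))" for y y'
  proof (rule ccontr)
    assume "\<not> ?thesis"
    then have "0 < L - norm ((1/2) *\<^sub>R (D y + D y'))" by simp
    from midpoint_approx[OF this, of y y'] obtain x where
      "norm (D x - (1/2) *\<^sub>R (D y + D y')) < L - norm ((1/2) *\<^sub>R (D y + D y'))" by blast
    then have "norm (D x) < L" using norm_triangle_ineq2[of "D x" "(1/2) *\<^sub>R (D y + D y')"] by linarith
    then show False using Ly[of x] by simp
  qed
  have "Cauchy (\<lambda>k. D (u k))"
  proof (rule CauchyI)
    fix e :: real assume e: "0 < e"
    have "(\<lambda>k. (g k)^2) \<longlonglongrightarrow> L^2" by (intro tendsto_power gL)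
    then have "\<forall>\<^sub>F k in sequentially. dist ((g k)^2) (L^2) < e^2 / 4"
      using e by (intro tendstoD) auto
    then obtain N where N: "\<And>k. k \<ge> N \<Longrightarrow> dist ((g k)^2) (L^2) < e^2 / 4"
      unfolding eventually_sequentially by blast
    show "\<exists>M. \<forall>m\<ge>M. \<forall>n\<ge>M. norm (D (u m) - D (u n)) < e"
    proof (intro exI allI impI)
      fix m n assume mn: "N \<le> m" "N \<le> n"
      have gm: "(g m)^2 < L^2 + e^2/4" using N[OF mn(1)] unfolding dist_real_def by linarith
      have gn: "(g n)^2 < L^2 + e^2/4" using N[OF mn(2)] unfolding dist_real_def by linarith
      have par: "(norm (D (u m) - D (u n)))^2 = 2 * (g m)^2 + 2 * (g n)^2 - 4 * (norm ((1/2) *\<^sub>R (D (u m) + D (u n))))^2"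
        unfolding g_def by (simp add: power2_norm_eq_inner inner_simps algebra_simps inner_commute)
      have "L^2 \<le> (norm ((1/2) *\<^sub>R (D (u m) + D (u n))))^2"
        using Lmid[of "u m" "u n"] L0 by (simp add: power_mono)
      then have "(norm (D (u m) - D (u n)))^2 < e^2" using par gm gn by linarith
      then show "norm (D (u m) - D (u n)) < e"
        by (rule power2_less_imp_less) (use e in simp)
    qed
  qed
  then show ?thesis by (simp add: Cauchy_convergent_iff)
qed

lemma main_abs:
  "\<exists>\<delta>. \<forall>s e. (\<forall>k. s (Suc k) = T (s k) + e k) \<longrightarrow> summable (\<lambda>k. norm (e k))
        \<longrightarrow> (\<lambda>k. s k - s (Suc k)) \<longlonglongrightarrow> \<delta>"
proof -
  define u where "u k = (T ^^ k) 0" for k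
  have u: "u (Suc k) = T (u k)" for k unfolding u_def by simp
  obtain \<delta> where d: "(\<lambda>k. D (u k)) \<longlonglongrightarrow> \<delta>" using orbit_conv[of u] u unfolding convergent_def by blast
  show ?thesis
  proof (intro exI allI impI)
    fix s e assume s: "\<forall>k. s (Suc k) = T (s k) + e k" and se: "summable (\<lambda>k. norm (e k))"
    have e0: "e \<longlonglongrightarrow> 0"
      using summable_LIMSEQ_zero[OF se] by (simp add: tendsto_norm_zero_iff)
    have p: "(\<lambda>k. D (s k) - D (u k)) \<longlonglongrightarrow> 0" using perturb[of s e u] s se u by blast
    have "(\<lambda>k. D (u k) + (D (s k) - D (u k)) - e k) \<longlonglongrightarrow> \<delta> + 0 - 0"
      by (intro tendsto_add tendsto_diff d p e0)
    moreover have "s k - s (Suc k) = D (u k) + (D (s k) - D (u k)) - e k" for k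
      using s unfolding D_def by (simp add: algebra_simps)
    ultimately show "(\<lambda>k. s k - s (Suc k)) \<longlonglongrightarrow> \<delta>" by simp
  qed
qed

end


declare transpose_matrix_vector[simp del]

lemma inner_transpose: "inner (\<xi>::real^'n) (transpose (A::real^'n^'m) *v w) = inner (A *v \<xi>) w"
proof -
  have "inner (w v* A) \<xi> = inner w (A *v \<xi>)" by (rule dot_lmul_matrix)
  then show ?thesis by (metis inner_commute transpose_matrix_vector)
qed

lemma firm_proj:
  assumes "convex S" "closed S" "S \<noteq> {}"
  shows "(norm (closest_point S u - closest_point S w))^2
         \<le> inner (closest_point S u - closest_point S w) (u - w)"
proof -
  have "inner (u - closest_point S u) (closest_point S w - closest_point S u) \<le> 0"
    and "inner (w - closest_point S w) (closest_point S u - closest_point S w) \<le> 0"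
    by (simp_all add: assms closest_point_dot closest_point_in_set)
  then show ?thesis
    by (simp add: power2_norm_eq_inner inner_simps inner_commute algebra_simps)
qed

locale admm =
  fixes P :: "real^'n^'n" and q :: "real^'n" and A :: "real^'n^'m" and C :: "(real^'m) set"
    and \<rho> \<sigma> \<alpha> :: real
  assumes psd: "\<forall>v. 0 \<le> v \<bullet> (P *v v)" and rho: "\<rho> > 0" and sigma: "\<sigma> > 0"
    and alpha: "0 < \<alpha>" "\<alpha> < 2"
    and Ccl: "closed C" and Ccv: "convex C" and Cne: "C \<noteq> {}"
begin

definition Mop :: "real^'n \<Rightarrow> real^'n" where
  "Mop \<xi> = P *v \<xi> + \<sigma> *\<^sub>R \<xi> + \<rho> *\<^sub>R (transpose A *v (A *v \<xi>))"

lemma Mop_linear: "linear Mop"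
  unfolding Mop_def
  by (rule linearI) (simp_all add: algebra_simps)

lemma Mop_diff: "Mop a - Mop b = Mop (a - b)"
  using linear_diff[OF Mop_linear] by simp

lemma Mop_pos: "\<sigma> * (norm \<xi>)^2 + \<rho> * (norm (A *v \<xi>))^2 \<le> inner \<xi> (Mop \<xi>)"
proof -
  have "inner \<xi> (Mop \<xi>) = inner \<xi> (P *v \<xi>) + \<sigma> * (norm \<xi>)^2 + \<rho> * (norm (A *v \<xi>))^2"
    unfolding Mop_def by (simp add: inner_simps inner_transpose power2_norm_eq_inner)
  then show ?thesis using psd by simp
qed

lemma Mop_bound: "\<sigma> * norm \<xi> \<le> norm (Mop \<xi>)"
proof (cases "\<xi> = 0")
  case True then show ?thesis by simp
next
  case False
  have "\<sigma> * (norm \<xi>)^2 \<le> inner \<xi> (Mop \<xi>)" using Mop_pos[of \<xi>] rho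
    by (smt (verit) mult_nonneg_nonneg zero_le_power2)
  also have "\<dots> \<le> norm \<xi> * norm (Mop \<xi>)" by (rule norm_cauchy_schwarz)
  finally have "(\<sigma> * norm \<xi>) * norm \<xi> \<le> norm (Mop \<xi>) * norm \<xi>"
    by (simp add: power2_eq_square algebra_simps)
  then show ?thesis using False by simp
qed

lemma Mop_inj: "inj Mop"
proof (rule injI)
  fix a b assume "Mop a = Mop b"
  then have "Mop (a - b) = 0" using Mop_diff by (metis diff_self)
  then have "\<sigma> * norm (a - b) \<le> 0" using Mop_bound[of "a - b"] by simp
  then show "a = b" using sigma by (simp add: mult_le_0_iff)
qed

lemma Mop_surj: "surj Mop"
  using linear_injective_imp_surjective[OF Mop_linear Mop_inj] by simp

definition Minv :: "real^'n \<Rightarrow> real^'n" where "Minv w = (SOME \<xi>. Mop \<xi> = w)"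

lemma Mop_Minv: "Mop (Minv w) = w"
  unfolding Minv_def by (rule someI_ex) (metis Mop_surj surjD)

lemma Minv_unique: "Mop \<xi> = w \<Longrightarrow> \<xi> = Minv w"
  using Mop_Minv[of w] Mop_inj by (metis injD)

lemma Minv_bound: "norm (Minv w - Minv w') \<le> norm (w - w') / \<sigma>"
proof -
  have "\<sigma> * norm (Minv w - Minv w') \<le> norm (w - w')"
    using Mop_bound[of "Minv w - Minv w'"] Mop_diff[of "Minv w" "Minv w'"] by (simp add: Mop_Minv)
  then show ?thesis using sigma by (simp add: pos_le_divide_eq mult.commute)
qed

abbreviation "PrC \<equiv> closest_point C"

definition Jg :: "(real^'n) \<times> (real^'m) \<Rightarrow> (real^'n) \<times> (real^'m)" where
  "Jg p = (let \<xi> = Minv (sqrt \<sigma> *\<^sub>R fst p + sqrt \<rho> *\<^sub>R (transpose A *v snd p) - q)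
           in (sqrt \<sigma> *\<^sub>R \<xi>, sqrt \<rho> *\<^sub>R (A *v \<xi>)))"

definition Jh :: "(real^'n) \<times> (real^'m) \<Rightarrow> (real^'n) \<times> (real^'m)" where
  "Jh p = (fst p, sqrt \<rho> *\<^sub>R PrC ((1 / sqrt \<rho>) *\<^sub>R snd p))"

definition Tm :: "(real^'n) \<times> (real^'m) \<Rightarrow> (real^'n) \<times> (real^'m)" where
  "Tm p = (1 - \<alpha>/2) *\<^sub>R p + (\<alpha>/2) *\<^sub>R (2 *\<^sub>R Jg (2 *\<^sub>R Jh p - p) - (2 *\<^sub>R Jh p - p))"

lemma norm_pair_sq: "(norm (a, b))^2 = (norm a)^2 + (norm b)^2"
  unfolding norm_Pair by simp

lemma firm_Jg: "firm Jg"
  unfolding firm_def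
proof (intro allI)
  fix p p' :: "(real^'n) \<times> (real^'m)"
  obtain a b where p: "p = (a, b)" by (cases p)
  obtain a' b' where p': "p' = (a', b')" by (cases p')
  define \<xi> where "\<xi> = Minv (sqrt \<sigma> *\<^sub>R a + sqrt \<rho> *\<^sub>R (transpose A *v b) - q)"
  define \<xi>' where "\<xi>' = Minv (sqrt \<sigma> *\<^sub>R a' + sqrt \<rho> *\<^sub>R (transpose A *v b') - q)"
  define d where "d = \<xi> - \<xi>'"
  have Md: "Mop d = sqrt \<sigma> *\<^sub>R (a - a') + sqrt \<rho> *\<^sub>R (transpose A *v (b - b'))"
    unfolding d_def \<xi>_def \<xi>'_def Mop_diff[symmetric] Mop_Minv
    by (simp add: algebra_simps matrix_vector_mult_diff_distrib)
  have J1: "Jg p = (sqrt \<sigma> *\<^sub>R \<xi>, sqrt \<rho> *\<^sub>R (A *v \<xi>))"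
    unfolding Jg_def p \<xi>_def by (simp add: Let_def)
  have J2: "Jg p' = (sqrt \<sigma> *\<^sub>R \<xi>', sqrt \<rho> *\<^sub>R (A *v \<xi>'))"
    unfolding Jg_def p' \<xi>'_def by (simp add: Let_def)
  have J: "Jg p - Jg p' = (sqrt \<sigma> *\<^sub>R d, sqrt \<rho> *\<^sub>R (A *v d))"
    unfolding J1 J2 d_def by (simp add: algebra_simps)
  have n: "(norm (Jg p - Jg p'))^2 = \<sigma> * (norm d)^2 + \<rho> * (norm (A *v d))^2"
    unfolding J norm_pair_sq using sigma rho by (simp add: power_mult_distrib)
  have "inner (Jg p - Jg p') (p - p') = inner (sqrt \<sigma> *\<^sub>R d, sqrt \<rho> *\<^sub>R (A *v d)) (a - a', b - b')"
    unfolding J by (simp add: p p')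
  also have "\<dots> = inner d (Mop d)"
    unfolding Md by (simp add: inner_simps inner_transpose algebra_simps)
  finally show "(norm (Jg p - Jg p'))^2 \<le> inner (Jg p - Jg p') (p - p')"
    using n Mop_pos[of d] by simp
qed

lemma firm_Jh: "firm Jh"
  unfolding firm_def
proof (intro allI)
  fix p p' :: "(real^'n) \<times> (real^'m)"
  obtain a b where p: "p = (a, b)" by (cases p)
  obtain a' b' where p': "p' = (a', b')" by (cases p')
  define v where "v = (1 / sqrt \<rho>) *\<^sub>R b"
  define v' where "v' = (1 / sqrt \<rho>) *\<^sub>R b'"
  have bv: "b - b' = sqrt \<rho> *\<^sub>R (v - v')" unfolding v_def v'_def using rho
    by (simp add: algebra_simps)
  have J: "Jh p - Jh p' = (a - a', sqrt \<rho> *\<^sub>R (PrC v - PrC v'))"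
    unfolding Jh_def p p' v_def v'_def by (simp add: algebra_simps)
  have fp: "(norm (PrC v - PrC v'))^2 \<le> inner (PrC v - PrC v') (v - v')"
    by (rule firm_proj[OF Ccv Ccl Cne])
  have n: "(norm (Jh p - Jh p'))^2 = (norm (a - a'))^2 + \<rho> * (norm (PrC v - PrC v'))^2"
    unfolding J norm_pair_sq using rho by (simp add: power_mult_distrib)
  have i: "inner (Jh p - Jh p') (p - p') = (norm (a - a'))^2 + \<rho> * inner (PrC v - PrC v') (v - v')"
    unfolding J using rho by (simp add: p p' bv power2_norm_eq_inner)
  show "(norm (Jh p - Jh p'))^2 \<le> inner (Jh p - Jh p') (p - p')"
    unfolding n i using fp rho by simp
qed

lemma Tm_avg: "avg_op Tm ((1 - \<alpha>/2) / (\<alpha>/2))"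
proof
  show "0 < (1 - \<alpha>/2) / (\<alpha>/2)" using alpha by simp
  fix x y
  show "(norm (Tm x - Tm y))^2 \<le> (norm (x - y))^2 - (1 - \<alpha>/2) / (\<alpha>/2) * (norm ((x - Tm x) - (y - Tm y)))^2"
    using avg_of_firm[OF firm_Jg firm_Jh, of "\<alpha>/2" x y] alpha unfolding Tm_def by simp
qed

lemma Tm_formula:
  fixes x :: "real^'n" and v :: "real^'m"
  defines "xh \<equiv> Minv (\<sigma> *\<^sub>R x + \<rho> *\<^sub>R (transpose A *v (2 *\<^sub>R PrC v - v)) - q)"
  shows "Tm (sqrt \<sigma> *\<^sub>R x, sqrt \<rho> *\<^sub>R v) =
    (sqrt \<sigma> *\<^sub>R (\<alpha> *\<^sub>R xh + (1 - \<alpha>) *\<^sub>R x),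
     sqrt \<rho> *\<^sub>R (v + \<alpha> *\<^sub>R (A *v xh - PrC v)))"
proof -
  have h: "Jh (sqrt \<sigma> *\<^sub>R x, sqrt \<rho> *\<^sub>R v) = (sqrt \<sigma> *\<^sub>R x, sqrt \<rho> *\<^sub>R PrC v)"
    unfolding Jh_def using rho by simp
  have r: "2 *\<^sub>R Jh (sqrt \<sigma> *\<^sub>R x, sqrt \<rho> *\<^sub>R v) - (sqrt \<sigma> *\<^sub>R x, sqrt \<rho> *\<^sub>R v)
      = (sqrt \<sigma> *\<^sub>R x, sqrt \<rho> *\<^sub>R (2 *\<^sub>R PrC v - v))"
    unfolding h by (simp add: vec_eq_iff algebra_simps)
  have arg: "sqrt \<sigma> *\<^sub>R (sqrt \<sigma> *\<^sub>R x) + sqrt \<rho> *\<^sub>R (transpose A *v (sqrt \<rho> *\<^sub>R (2 *\<^sub>R PrC v - v))) - q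
      = \<sigma> *\<^sub>R x + \<rho> *\<^sub>R (transpose A *v (2 *\<^sub>R PrC v - v)) - q"
    using sigma rho by (simp add: matrix_vector_mult_scaleR)
  have g: "Jg (sqrt \<sigma> *\<^sub>R x, sqrt \<rho> *\<^sub>R (2 *\<^sub>R PrC v - v)) = (sqrt \<sigma> *\<^sub>R xh, sqrt \<rho> *\<^sub>R (A *v xh))"
    unfolding Jg_def Let_def fst_conv snd_conv arg xh_def ..
  show ?thesis
    unfolding Tm_def r g by (simp add: vec_eq_iff algebra_simps)
qed

lemma sqrt_bound1: "norm (u::'a::real_normed_vector) \<le> sqrt ((norm u)^2 + (norm w)^2)"
  by (simp add: real_le_rsqrt)

lemma sqrt_bound2: "norm (w::'a::real_normed_vector) \<le> sqrt ((norm u)^2 + (norm w)^2)"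
  by (simp add: real_le_rsqrt)

lemma adm_step:
  assumes adm: "approx_admm P q A C \<rho> \<sigma> \<alpha> \<mu> \<nu> x z y xt zt"
  shows "\<exists>xh. Mop xh = \<sigma> *\<^sub>R x k + \<rho> *\<^sub>R (transpose A *v (z k - (1 / \<rho>) *\<^sub>R y k)) - q
          \<and> norm (xt (Suc k) - xh) \<le> \<mu> k \<and> norm (zt (Suc k) - A *v xh) \<le> \<mu> k"
    and "x (Suc k) = \<alpha> *\<^sub>R xt (Suc k) + (1 - \<alpha>) *\<^sub>R x k"
    and "z (Suc k) + (1 / \<rho>) *\<^sub>R y (Suc k) = \<alpha> *\<^sub>R zt (Suc k) + (1 - \<alpha>) *\<^sub>R z k + (1 / \<rho>) *\<^sub>R y k"
    and "norm (z (Suc k) - PrC (z (Suc k) + (1 / \<rho>) *\<^sub>R y (Suc k))) \<le> \<nu> k"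
proof -
  have a: "(\<exists>xh zh.
         P *v xh + \<sigma> *\<^sub>R xh + \<rho> *\<^sub>R (transpose A *v zh)
           = \<sigma> *\<^sub>R x k + \<rho> *\<^sub>R (transpose A *v (z k - (1 / \<rho>) *\<^sub>R y k)) - q \<and>
         \<rho> *\<^sub>R (A *v xh) - \<rho> *\<^sub>R zh = 0 \<and>
         sqrt ((norm (xt (Suc k) - xh))\<^sup>2 + (norm (zt (Suc k) - zh))\<^sup>2) \<le> \<mu> k) \<and>
      x (Suc k) = \<alpha> *\<^sub>R xt (Suc k) + (1 - \<alpha>) *\<^sub>R x k \<and>
      dist (z (Suc k))
        (closest_point C (\<alpha> *\<^sub>R zt (Suc k) + (1 - \<alpha>) *\<^sub>R z k + (1 / \<rho>) *\<^sub>R y k)) \<le> \<nu> k \<and>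
      y (Suc k) = y k + \<rho> *\<^sub>R (\<alpha> *\<^sub>R zt (Suc k) + (1 - \<alpha>) *\<^sub>R z k - z (Suc k))"
    using adm unfolding approx_admm_def by blast
  then obtain xh zh where e1: "P *v xh + \<sigma> *\<^sub>R xh + \<rho> *\<^sub>R (transpose A *v zh)
           = \<sigma> *\<^sub>R x k + \<rho> *\<^sub>R (transpose A *v (z k - (1 / \<rho>) *\<^sub>R y k)) - q"
    and e2: "\<rho> *\<^sub>R (A *v xh) - \<rho> *\<^sub>R zh = 0"
    and e3: "sqrt ((norm (xt (Suc k) - xh))\<^sup>2 + (norm (zt (Suc k) - zh))\<^sup>2) \<le> \<mu> k"
    by blast
  have zh: "zh = A *v xh"
  proof -
    have "\<rho> *\<^sub>R (A *v xh - zh) = 0" using e2 by (simp add: algebra_simps)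
    then show ?thesis using rho by simp
  qed
  show "\<exists>xh. Mop xh = \<sigma> *\<^sub>R x k + \<rho> *\<^sub>R (transpose A *v (z k - (1 / \<rho>) *\<^sub>R y k)) - q
          \<and> norm (xt (Suc k) - xh) \<le> \<mu> k \<and> norm (zt (Suc k) - A *v xh) \<le> \<mu> k"
  proof (intro exI conjI)
    show "Mop xh = \<sigma> *\<^sub>R x k + \<rho> *\<^sub>R (transpose A *v (z k - (1 / \<rho>) *\<^sub>R y k)) - q"
      using e1 unfolding Mop_def zh .
    show "norm (xt (Suc k) - xh) \<le> \<mu> k" using e3 sqrt_bound1 order_trans by blast
    show "norm (zt (Suc k) - A *v xh) \<le> \<mu> k" using e3 sqrt_bound2 order_trans unfolding zh by blast
  qed
  show "x (Suc k) = \<alpha> *\<^sub>R xt (Suc k) + (1 - \<alpha>) *\<^sub>R x k" using a by blast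
  have yS: "y (Suc k) = y k + \<rho> *\<^sub>R (\<alpha> *\<^sub>R zt (Suc k) + (1 - \<alpha>) *\<^sub>R z k - z (Suc k))" using a by blast
  show V: "z (Suc k) + (1 / \<rho>) *\<^sub>R y (Suc k) = \<alpha> *\<^sub>R zt (Suc k) + (1 - \<alpha>) *\<^sub>R z k + (1 / \<rho>) *\<^sub>R y k"
    unfolding yS using rho by (simp add: algebra_simps)
  have "dist (z (Suc k))
        (closest_point C (\<alpha> *\<^sub>R zt (Suc k) + (1 - \<alpha>) *\<^sub>R z k + (1 / \<rho>) *\<^sub>R y k)) \<le> \<nu> k"
    using a by blast
  then show "norm (z (Suc k) - PrC (z (Suc k) + (1 / \<rho>) *\<^sub>R y (Suc k))) \<le> \<nu> k"
    unfolding V dist_norm .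
qed

lemma step_err:
  assumes adm: "approx_admm P q A C \<rho> \<sigma> \<alpha> \<mu> \<nu> x z y xt zt"
    and mu0: "\<forall>k. 0 \<le> \<mu> k" and nu0: "\<forall>k. 0 \<le> \<nu> k"
  defines "S \<equiv> \<lambda>k. (sqrt \<sigma> *\<^sub>R x k, sqrt \<rho> *\<^sub>R (z k + (1 / \<rho>) *\<^sub>R y k))"
  shows "\<exists>K\<ge>0. \<forall>k. norm (S (Suc (Suc k)) - Tm (S (Suc k))) \<le> K * (\<mu> (Suc k) + \<nu> k)"
proof -
  obtain KA where KA: "KA > 0" "\<And>w. norm (A *v w) \<le> norm w * KA"
    using bounded_linear.pos_bounded[OF matrix_vector_mul_bounded_linear[of A]] by blast
  obtain KT where KT: "KT > 0" "\<And>w. norm (transpose A *v w) \<le> norm w * KT"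
    using bounded_linear.pos_bounded[OF matrix_vector_mul_bounded_linear[of "transpose A"]] by blast
  define c1 where "c1 = 2 * \<rho> * KT / \<sigma>"
  have c10: "0 \<le> c1" unfolding c1_def using rho KT sigma by simp
  define K where "K = sqrt \<sigma> * \<alpha> * (1 + c1) + sqrt \<rho> * \<alpha> * (2 + KA * c1)"
  show ?thesis
  proof (intro exI conjI allI)
    show "0 \<le> K" unfolding K_def using c10 KA alpha sigma rho by simp
    fix k
    define n where "n = Suc k"
    define V where "V = z n + (1 / \<rho>) *\<^sub>R y n"
    define e where "e = z n - PrC V"
    have e_le: "norm e \<le> \<nu> k" using adm_step(4)[OF adm, of k] unfolding e_def V_def n_def .
    obtain xh where xh1: "Mop xh = \<sigma> *\<^sub>R x n + \<rho> *\<^sub>R (transpose A *v (z n - (1 / \<rho>) *\<^sub>R y n)) - q"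
      and xh2: "norm (xt (Suc n) - xh) \<le> \<mu> n" and xh3: "norm (zt (Suc n) - A *v xh) \<le> \<mu> n"
      using adm_step(1)[OF adm, of n] by blast
    define W where "W = \<sigma> *\<^sub>R x n + \<rho> *\<^sub>R (transpose A *v (z n - (1 / \<rho>) *\<^sub>R y n)) - q"
    define W0 where "W0 = \<sigma> *\<^sub>R x n + \<rho> *\<^sub>R (transpose A *v (2 *\<^sub>R PrC V - V)) - q"
    define xc where "xc = Minv W0"
    have xhW: "xh = Minv W" unfolding W_def by (rule Minv_unique[OF xh1])
    have arg: "(z n - (1 / \<rho>) *\<^sub>R y n) - (2 *\<^sub>R PrC V - V) = 2 *\<^sub>R e"
      unfolding e_def V_def by (simp add: vec_eq_iff algebra_simps)
    have dW: "W - W0 = \<rho> *\<^sub>R (transpose A *v (2 *\<^sub>R e))"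
    proof -
      have "W - W0 = \<rho> *\<^sub>R (transpose A *v (z n - (1 / \<rho>) *\<^sub>R y n)) - \<rho> *\<^sub>R (transpose A *v (2 *\<^sub>R PrC V - V))"
        unfolding W_def W0_def by simp
      also have "\<dots> = \<rho> *\<^sub>R (transpose A *v ((z n - (1 / \<rho>) *\<^sub>R y n) - (2 *\<^sub>R PrC V - V)))"
        by (simp only: matrix_vector_mult_diff_distrib scaleR_right_diff_distrib)
      finally show ?thesis unfolding arg .
    qed
    have nW: "norm (W - W0) \<le> \<rho> * (2 * \<nu> k * KT)"
    proof -
      have "norm (W - W0) = \<rho> * norm (transpose A *v (2 *\<^sub>R e))" unfolding dW using rho by simp
      also have "\<dots> \<le> \<rho> * (norm (2 *\<^sub>R e) * KT)" using KT(2)[of "2 *\<^sub>R e"] rho by (intro mult_left_mono) auto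
      also have "\<dots> \<le> \<rho> * (2 * \<nu> k * KT)" using e_le rho KT by (simp add: mult_left_mono mult_right_mono)
      finally show ?thesis .
    qed
    have dx: "norm (xh - xc) \<le> \<nu> k * c1"
    proof -
      have "norm (xh - xc) \<le> norm (W - W0) / \<sigma>" unfolding xhW xc_def by (rule Minv_bound)
      also have "\<dots> \<le> \<rho> * (2 * \<nu> k * KT) / \<sigma>" using nW sigma by (simp add: divide_right_mono)
      also have "\<dots> = \<nu> k * c1" unfolding c1_def by simp
      finally show ?thesis .
    qed
    have Sn: "S n = (sqrt \<sigma> *\<^sub>R x n, sqrt \<rho> *\<^sub>R V)" unfolding S_def V_def by simp
    have TS: "Tm (S n) = (sqrt \<sigma> *\<^sub>R (\<alpha> *\<^sub>R xc + (1 - \<alpha>) *\<^sub>R x n), sqrt \<rho> *\<^sub>R (V + \<alpha> *\<^sub>R (A *v xc - PrC V)))"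
      unfolding Sn xc_def W0_def by (rule Tm_formula)
    have SS: "S (Suc n) = (sqrt \<sigma> *\<^sub>R (\<alpha> *\<^sub>R xt (Suc n) + (1 - \<alpha>) *\<^sub>R x n),
        sqrt \<rho> *\<^sub>R (\<alpha> *\<^sub>R zt (Suc n) + (1 - \<alpha>) *\<^sub>R z n + (1 / \<rho>) *\<^sub>R y n))"
      unfolding S_def using adm_step(2)[OF adm, of n] adm_step(3)[OF adm, of n] by simp
    have diff: "S (Suc n) - Tm (S n) = ((sqrt \<sigma> * \<alpha>) *\<^sub>R (xt (Suc n) - xc),
       (sqrt \<rho> * \<alpha>) *\<^sub>R ((zt (Suc n) - A *v xh) + A *v (xh - xc) - e))"
      unfolding SS TS e_def V_def by (simp add: vec_eq_iff algebra_simps)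
    have "norm (S (Suc n) - Tm (S n)) \<le> norm ((sqrt \<sigma> * \<alpha>) *\<^sub>R (xt (Suc n) - xc))
        + norm ((sqrt \<rho> * \<alpha>) *\<^sub>R ((zt (Suc n) - A *v xh) + A *v (xh - xc) - e))"
      unfolding diff by (rule norm_Pair_le)
    also have "\<dots> \<le> (sqrt \<sigma> * \<alpha>) * (\<mu> n + \<nu> k * c1) + (sqrt \<rho> * \<alpha>) * (\<mu> n + \<nu> k * c1 * KA + \<nu> k)"
    proof (rule add_mono)
      have "norm (xt (Suc n) - xc) \<le> norm (xt (Suc n) - xh) + norm (xh - xc)"
        by (rule order_trans[OF _ norm_triangle_ineq]) simp
      then have "norm (xt (Suc n) - xc) \<le> \<mu> n + \<nu> k * c1" using xh2 dx by linarith
      then show "norm ((sqrt \<sigma> * \<alpha>) *\<^sub>R (xt (Suc n) - xc)) \<le> (sqrt \<sigma> * \<alpha>) * (\<mu> n + \<nu> k * c1)"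
        using alpha sigma by (simp add: mult_left_mono)
      have "norm (A *v (xh - xc)) \<le> \<nu> k * c1 * KA"
        using KA(2)[of "xh - xc"] dx KA(1) by (meson order_trans mult_right_mono less_imp_le)
      then have "norm ((zt (Suc n) - A *v xh) + A *v (xh - xc) - e) \<le> \<mu> n + \<nu> k * c1 * KA + \<nu> k"
        using xh3 e_le norm_triangle_ineq[of "zt (Suc n) - A *v xh" "A *v (xh - xc)"]
          norm_triangle_ineq4[of "(zt (Suc n) - A *v xh) + A *v (xh - xc)" e] by linarith
      then show "norm ((sqrt \<rho> * \<alpha>) *\<^sub>R ((zt (Suc n) - A *v xh) + A *v (xh - xc) - e))
          \<le> (sqrt \<rho> * \<alpha>) * (\<mu> n + \<nu> k * c1 * KA + \<nu> k)"
        using alpha rho by (simp add: mult_left_mono)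
    qed
    also have "\<dots> \<le> K * (\<mu> n + \<nu> k)"
    proof -
      have m: "0 \<le> \<mu> n" "0 \<le> \<nu> k" using mu0 nu0 by auto
      have b1: "\<mu> n + \<nu> k * c1 \<le> (1 + c1) * (\<mu> n + \<nu> k)"
        using mult_nonneg_nonneg[OF c10 m(1)] m by (simp add: algebra_simps)
      have b2: "\<mu> n + \<nu> k * c1 * KA + \<nu> k \<le> (2 + KA * c1) * (\<mu> n + \<nu> k)"
        using mult_nonneg_nonneg[OF mult_nonneg_nonneg[OF less_imp_le[OF KA(1)] c10] m(1)] m
        by (simp add: algebra_simps)
      have "(sqrt \<sigma> * \<alpha>) * (\<mu> n + \<nu> k * c1) \<le> (sqrt \<sigma> * \<alpha>) * ((1 + c1) * (\<mu> n + \<nu> k))"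
        using b1 alpha sigma by (intro mult_left_mono) auto
      moreover have "(sqrt \<rho> * \<alpha>) * (\<mu> n + \<nu> k * c1 * KA + \<nu> k) \<le> (sqrt \<rho> * \<alpha>) * ((2 + KA * c1) * (\<mu> n + \<nu> k))"
        using b2 alpha rho by (intro mult_left_mono) auto
      ultimately show ?thesis unfolding K_def by (simp add: algebra_simps)
    qed
    finally show "norm (S (Suc (Suc k)) - Tm (S (Suc k))) \<le> K * (\<mu> (Suc k) + \<nu> k)"
      unfolding n_def .
  qed
qed

lemma run_limits:
  assumes adm: "approx_admm P q A C \<rho> \<sigma> \<alpha> \<mu> \<nu> x z y xt zt"
    and mu0: "\<forall>k. 0 \<le> \<mu> k" and mus: "summable \<mu>"
    and nu0: "\<forall>k. 0 \<le> \<nu> k" and nus: "summable \<nu>"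
    and dl: "\<forall>s e. (\<forall>k. s (Suc k) = Tm (s k) + e k) \<longrightarrow> summable (\<lambda>k. norm (e k))
              \<longrightarrow> (\<lambda>k. s k - s (Suc k)) \<longlonglongrightarrow> \<delta>"
  shows "(\<lambda>k. x (Suc k) - x k) \<longlonglongrightarrow> (- (1 / sqrt \<sigma>)) *\<^sub>R fst \<delta>"
    and "(\<lambda>k. y (Suc k) - y k) \<longlonglongrightarrow>
           \<rho> *\<^sub>R ((- (1 / sqrt \<rho>)) *\<^sub>R snd \<delta> - A *v ((- (1 / sqrt \<sigma>)) *\<^sub>R fst \<delta>))"
proof -
  define S where "S = (\<lambda>k. (sqrt \<sigma> *\<^sub>R x k, sqrt \<rho> *\<^sub>R (z k + (1 / \<rho>) *\<^sub>R y k)))"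
  obtain K where K0: "K \<ge> 0" and K: "\<And>k. norm (S (Suc (Suc k)) - Tm (S (Suc k))) \<le> K * (\<mu> (Suc k) + \<nu> k)"
    using step_err[OF adm mu0 nu0] unfolding S_def by blast
  define s where "s j = S (Suc j)" for j
  define e where "e j = s (Suc j) - Tm (s j)" for j
  have se: "\<forall>k. s (Suc k) = Tm (s k) + e k" unfolding e_def by simp
  have "summable (\<lambda>j. K * (\<mu> (Suc j) + \<nu> j))"
    using mus nus by (intro summable_mult summable_add) (simp_all add: summable_Suc_iff)
  then have es: "summable (\<lambda>k. norm (e k))"
    by (rule summable_comparison_test[rotated]) (use K in \<open>auto simp: e_def s_def\<close>)
  have "(\<lambda>k. s k - s (Suc k)) \<longlonglongrightarrow> \<delta>" using dl se es by blast
  then have "(\<lambda>k. - (s k - s (Suc k))) \<longlonglongrightarrow> - \<delta>" by (rule tendsto_minus)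
  then have "(\<lambda>k. S (Suc (Suc k)) - S (Suc k)) \<longlonglongrightarrow> - \<delta>" unfolding s_def by simp
  then have Sl: "(\<lambda>k. S (Suc k) - S k) \<longlonglongrightarrow> - \<delta>" by (rule LIMSEQ_imp_Suc)
  define dx where "dx = (- (1 / sqrt \<sigma>)) *\<^sub>R fst \<delta>"
  define dv where "dv = (- (1 / sqrt \<rho>)) *\<^sub>R snd \<delta>"
  define X where "X k = x (Suc k) - x k" for k
  define V where "V k = z k + (1 / \<rho>) *\<^sub>R y k" for k
  define W where "W k = V (Suc k) - V k" for k
  have "(\<lambda>k. (1 / sqrt \<sigma>) *\<^sub>R fst (S (Suc k) - S k)) \<longlonglongrightarrow> (1 / sqrt \<sigma>) *\<^sub>R fst (- \<delta>)"
    by (intro tendsto_scaleR tendsto_const tendsto_fst Sl)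
  moreover have "(\<lambda>k. (1 / sqrt \<sigma>) *\<^sub>R fst (S (Suc k) - S k)) = X"
    unfolding S_def X_def using sigma by (auto simp: algebra_simps)
  ultimately have Xl: "X \<longlonglongrightarrow> dx" unfolding dx_def by simp
  then show "(\<lambda>k. x (Suc k) - x k) \<longlonglongrightarrow> (- (1 / sqrt \<sigma>)) *\<^sub>R fst \<delta>"
    unfolding X_def dx_def .
  have "(\<lambda>k. (1 / sqrt \<rho>) *\<^sub>R snd (S (Suc k) - S k)) \<longlonglongrightarrow> (1 / sqrt \<rho>) *\<^sub>R snd (- \<delta>)"
    by (intro tendsto_scaleR tendsto_const tendsto_snd Sl)
  moreover have "(\<lambda>k. (1 / sqrt \<rho>) *\<^sub>R snd (S (Suc k) - S k)) = W"
    unfolding S_def W_def V_def using rho by (auto simp: algebra_simps)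
  ultimately have Wl: "W \<longlonglongrightarrow> dv" unfolding dv_def by simp
  obtain KA where KA: "KA > 0" "\<And>w. norm (A *v w) \<le> norm w * KA"
    using bounded_linear.pos_bounded[OF matrix_vector_mul_bounded_linear[of A]] by blast
  define fz where "fz k = zt (Suc k) - A *v xt (Suc k)" for k
  have fzb: "norm (fz k) \<le> (1 + KA) * \<mu> k" for k
  proof -
    obtain xh where h2: "norm (xt (Suc k) - xh) \<le> \<mu> k" and h3: "norm (zt (Suc k) - A *v xh) \<le> \<mu> k"
      using adm_step(1)[OF adm, of k] by blast
    have "fz k = (zt (Suc k) - A *v xh) + A *v (xh - xt (Suc k))"
      unfolding fz_def by (simp add: algebra_simps)
    then have "norm (fz k) \<le> norm (zt (Suc k) - A *v xh) + norm (A *v (xh - xt (Suc k)))"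
      by (simp add: norm_triangle_ineq)
    moreover have "norm (A *v (xh - xt (Suc k))) \<le> \<mu> k * KA"
      using KA(2)[of "xh - xt (Suc k)"] h2 KA(1) norm_minus_commute[of xh "xt (Suc k)"]
      by (metis order_trans mult_right_mono less_imp_le)
    ultimately show ?thesis using h3 by (simp add: algebra_simps)
  qed
  have fzl: "fz \<longlonglongrightarrow> 0"
  proof (rule Lim_null_comparison)
    show "\<forall>\<^sub>F k in sequentially. norm (fz k) \<le> (1 + KA) * \<mu> k" using fzb by simp
    have "\<mu> \<longlonglongrightarrow> 0" by (rule summable_LIMSEQ_zero[OF mus])
    then show "(\<lambda>k. (1 + KA) * \<mu> k) \<longlonglongrightarrow> 0" using tendsto_mult_right_zero by blast
  qed
  have zk: "z k = (1 / \<alpha>) *\<^sub>R (A *v X k) + A *v x k + fz k - (1 / \<alpha>) *\<^sub>R W k" for k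
  proof -
    have Wk: "W k = \<alpha> *\<^sub>R (zt (Suc k) - z k)"
      unfolding W_def V_def using adm_step(3)[OF adm, of k] by (simp add: algebra_simps)
    have xk: "x (Suc k) = \<alpha> *\<^sub>R xt (Suc k) + (1 - \<alpha>) *\<^sub>R x k" by (rule adm_step(2)[OF adm])
    have xtk: "xt (Suc k) = (1 / \<alpha>) *\<^sub>R X k + x k"
      unfolding X_def xk using alpha by (simp add: vec_eq_iff field_simps)
    have "z k = zt (Suc k) - (1 / \<alpha>) *\<^sub>R W k" unfolding Wk using alpha by (simp add: vec_eq_iff)
    also have "\<dots> = A *v xt (Suc k) + fz k - (1 / \<alpha>) *\<^sub>R W k" unfolding fz_def by simp
    also have "\<dots> = (1 / \<alpha>) *\<^sub>R (A *v X k) + A *v x k + fz k - (1 / \<alpha>) *\<^sub>R W k"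
      unfolding xtk by (simp add: algebra_simps matrix_vector_mult_scaleR)
    finally show ?thesis .
  qed
  have zd: "z (Suc k) - z k = (1 / \<alpha>) *\<^sub>R (A *v (X (Suc k) - X k)) + A *v X k + (fz (Suc k) - fz k)
      - (1 / \<alpha>) *\<^sub>R (W (Suc k) - W k)" for k
  proof -
    have g: "\<And>p1 a1 f1 w1 p0 a0 f0 w0 :: real^'m. (p1 + a1 + f1 - w1) - (p0 + a0 + f0 - w0)
        = (p1 - p0) + (a1 - a0) + (f1 - f0) - (w1 - w0)" by (simp add: algebra_simps)
    have "A *v x (Suc k) - A *v x k = A *v X k" by (simp add: X_def matrix_vector_mult_diff_distrib)
    moreover have "(1 / \<alpha>) *\<^sub>R (A *v X (Suc k)) - (1 / \<alpha>) *\<^sub>R (A *v X k) = (1 / \<alpha>) *\<^sub>R (A *v (X (Suc k) - X k))"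
      by (simp add: matrix_vector_mult_diff_distrib scaleR_right_diff_distrib)
    moreover have "(1 / \<alpha>) *\<^sub>R W (Suc k) - (1 / \<alpha>) *\<^sub>R W k = (1 / \<alpha>) *\<^sub>R (W (Suc k) - W k)"
      by (simp add: scaleR_right_diff_distrib)
    ultimately show ?thesis unfolding zk[of "Suc k"] zk[of k] g by simp
  qed
  have bl: "bounded_linear ((*v) A)" by simp
  have "(\<lambda>k. (1 / \<alpha>) *\<^sub>R (A *v (X (Suc k) - X k)) + A *v X k + (fz (Suc k) - fz k)
      - (1 / \<alpha>) *\<^sub>R (W (Suc k) - W k)) \<longlonglongrightarrow>
      (1 / \<alpha>) *\<^sub>R (A *v (dx - dx)) + A *v dx + (0 - 0) - (1 / \<alpha>) *\<^sub>R (dv - dv)"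
    by (intro tendsto_add tendsto_diff tendsto_scaleR tendsto_const
        bounded_linear.tendsto[OF bl] LIMSEQ_Suc Xl Wl fzl)
  then have zl: "(\<lambda>k. z (Suc k) - z k) \<longlonglongrightarrow> A *v dx" unfolding zd by simp
  have yd: "y (Suc k) - y k = \<rho> *\<^sub>R (W k - (z (Suc k) - z k))" for k
    unfolding W_def V_def using rho by (simp add: algebra_simps)
  have "(\<lambda>k. \<rho> *\<^sub>R (W k - (z (Suc k) - z k))) \<longlonglongrightarrow> \<rho> *\<^sub>R (dv - A *v dx)"
    by (intro tendsto_scaleR tendsto_const tendsto_diff Wl zl)
  then show "(\<lambda>k. y (Suc k) - y k) \<longlonglongrightarrow>
           \<rho> *\<^sub>R ((- (1 / sqrt \<rho>)) *\<^sub>R snd \<delta> - A *v ((- (1 / sqrt \<sigma>)) *\<^sub>R fst \<delta>))"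
    unfolding yd dx_def[symmetric] dv_def[symmetric] .
qed

end


lemma restr_linear: "linear (restr S)"
  unfolding restr_def by (rule linearI) (simp_all add: vec_eq_iff)

lemma pcc_props:
  assumes "product_compact_cone C"
  shows "closed C" "convex C" "C \<noteq> {}"
proof -
  obtain S D K b where D: "D \<noteq> {}" "compact D" "convex D" "\<forall>d\<in>D. restr S d = d"
    and K: "K \<noteq> {}" "closed K" "convex K" "cone K" "\<forall>v\<in>K. restr (- S) v = v"
    and b: "restr (- S) b = b"
    and C: "C = {z. restr S z \<in> D \<and> restr (- S) z \<in> (\<lambda>v. b + v) ` K}"
    using assms unfolding product_compact_cone_def by blast
  have Ceq: "C = restr S -` D \<inter> restr (- S) -` ((+) b ` K)" unfolding C by auto
  have ct: "continuous (at x) (restr T)" for T x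
    by (rule linear_continuous_at) (simp add: restr_linear linear_conv_bounded_linear[symmetric])
  show "closed C" unfolding Ceq
    by (intro closed_Int continuous_closed_vimage closed_translation compact_imp_closed D K ct)
  show "convex C" unfolding Ceq
    by (intro convex_Int convex_linear_vimage convex_translation restr_linear D K)
  obtain d where d: "d \<in> D" using D by blast
  obtain w where w: "w \<in> K" using K by blast
  have dS: "restr S d = d" using D(4) d by blast
  have wK: "restr (- S) w = w" using K(5) w by blast
  have r1: "restr T (restr (- T) z) = 0" for T z by (simp add: restr_def vec_eq_iff)
  have r2: "restr (- T) (restr T z) = 0" for T z by (simp add: restr_def vec_eq_iff)
  have add: "restr T (u + v) = restr T u + restr T v" for T u v
    using linear_add[OF restr_linear] by blast
  have "restr S (d + b + w) = d"
    unfolding add using r1[of S b] r1[of S w] dS b wK by simp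
  moreover have "restr (- S) (d + b + w) = b + w"
    unfolding add using r2[of S d] dS b wK by (metis add_0)
  ultimately have "d + b + w \<in> C" unfolding C using d w by auto
  then show "C \<noteq> {}" by blast
qed

theorem proposition1:
  fixes P :: "real^'n^'n" and q :: "real^'n" and A :: "real^'n^'m"
    and C :: "(real^'m) set"
    and \<rho> \<sigma> \<alpha> :: real and x0 :: "real^'n" and z0 y0 :: "real^'m"
    and \<mu> \<nu> :: "nat \<Rightarrow> real"
    and x xe xt xte :: "nat \<Rightarrow> real^'n" and z y ze ye zt zte :: "nat \<Rightarrow> real^'m"
  assumes P_sym: "transpose P = P"
    and P_psd: "\<forall>v. 0 \<le> v \<bullet> (P *v v)"
    and C_struct: "product_compact_cone C"
    and rho: "\<rho> > 0" and sigma: "\<sigma> > 0" and alpha: "0 < \<alpha>" "\<alpha> < 2"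
    and mu_nonneg: "\<forall>k. 0 \<le> \<mu> k" and mu_sum: "summable \<mu>"
    and nu_nonneg: "\<forall>k. 0 \<le> \<nu> k" and nu_sum: "summable \<nu>"
    and approx: "approx_admm P q A C \<rho> \<sigma> \<alpha> \<mu> \<nu> x z y xt zt"
    and approx_init: "x 0 = x0" "z 0 = z0" "y 0 = y0"
    and exact: "approx_admm P q A C \<rho> \<sigma> \<alpha> (\<lambda>_. 0) (\<lambda>_. 0) xe ze ye xte zte"
    and exact_init: "xe 0 = x0" "ze 0 = z0" "ye 0 = y0"
  shows "\<exists>\<delta>x \<delta>y.
           (\<lambda>k. x (Suc k) - x k) \<longlonglongrightarrow> \<delta>x \<and> (\<lambda>k. y (Suc k) - y k) \<longlonglongrightarrow> \<delta>y \<and>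
           (\<lambda>k. xe (Suc k) - xe k) \<longlonglongrightarrow> \<delta>x \<and> (\<lambda>k. ye (Suc k) - ye k) \<longlonglongrightarrow> \<delta>y"
proof -
  have Cp: "closed C" "convex C" "C \<noteq> {}" using pcc_props[OF C_struct] by auto
  interpret ad: admm P q A C \<rho> \<sigma> \<alpha>
    using P_psd rho sigma alpha Cp by unfold_locales auto
  interpret av: avg_op ad.Tm "(1 - \<alpha>/2) / (\<alpha>/2)" by (rule ad.Tm_avg)
  obtain \<delta> where dl: "\<forall>s e. (\<forall>k. s (Suc k) = ad.Tm (s k) + e k) \<longrightarrow> summable (\<lambda>k. norm (e k))
        \<longrightarrow> (\<lambda>k. s k - s (Suc k)) \<longlonglongrightarrow> \<delta>" using av.main_abs by blast
  have a1: "(\<lambda>k. x (Suc k) - x k) \<longlonglongrightarrow> (- (1 / sqrt \<sigma>)) *\<^sub>R fst \<delta>"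
    using ad.run_limits(1)[OF approx mu_nonneg mu_sum nu_nonneg nu_sum dl] .
  have a2: "(\<lambda>k. y (Suc k) - y k) \<longlonglongrightarrow>
           \<rho> *\<^sub>R ((- (1 / sqrt \<rho>)) *\<^sub>R snd \<delta> - A *v ((- (1 / sqrt \<sigma>)) *\<^sub>R fst \<delta>))"
    using ad.run_limits(2)[OF approx mu_nonneg mu_sum nu_nonneg nu_sum dl] .
  have e1: "(\<lambda>k. xe (Suc k) - xe k) \<longlonglongrightarrow> (- (1 / sqrt \<sigma>)) *\<^sub>R fst \<delta>"
    using ad.run_limits(1)[OF exact _ _ _ _ dl] by simp
  have e2: "(\<lambda>k. ye (Suc k) - ye k) \<longlonglongrightarrow>
           \<rho> *\<^sub>R ((- (1 / sqrt \<rho>)) *\<^sub>R snd \<delta> - A *v ((- (1 / sqrt \<sigma>)) *\<^sub>R fst \<delta>))"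
    using ad.run_limits(2)[OF exact _ _ _ _ dl] by simp
  show ?thesis using a1 a2 e1 e2 by blast
qed

end
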